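(* For any frame $L$, $\mathrm{LSC}(L)=\mathrm{F}(L)\cap\overline{\mathrm{LSC}}(L)$ and $\mathrm{USC}(L)=\mathrm{F}(L)\cap\overline{\mathrm{USC}}(L)$.
   Context: $\mathbb{Q}$ is the rationals. A sublocale of $L$ is a subset closed under arbitrary meets and such that $x\to s\in S$ for $x\in L$, $s\in S$; $\mathrm{coS}(L)$ is the frame of all sublocales ordered by reverse inclusion (bottom $0=L$, top $1=\{1\}$), with lattice operations and pseudocomplements $^\ast$ taken in $\mathrm{coS}(L)$. $\mathfrak{c}(a)=\{x\mid x\ge a\}$ is the closed sublocale of $a\in L$. The frame $\mathfrak{L}(\overline{\mathbb{IR}})$ is presented by generators $(r,\textsf{---})$, $(\textsf{---},s)$ ($r,s\in\mathbb{Q}$) subject to (r1) $(r,\textsf{---})\wedge(\textsf{---},s)=0$ whenever $r\ge s$; (r3) $(r,\textsf{---})=\bigvee_{s>r}(s,\textsf{---})$; (r4) $(\textsf{---},s)=\bigvee_{r<s}(\textsf{---},r)$; adding (r2) $(r,\textsf{---})\vee(\textsf{---},s)=1$ for $r<s$ gives the frame $\mathfrak{L}(\overline{\mathbb{R}})$, so frame homomorphisms $\mathfrak{L}(\overline{\mathbb{R}})\to M$ are identified with homomorphisms $\mathfrak{L}(\overline{\mathbb{IR}})\to M$ satisfying (r2). $\overline{\mathrm{F}}(L)$ is the set of homomorphisms $f\colon\mathfrak{L}(\overline{\mathbb{IR}})\to\mathrm{coS}(L)$ with $f(r,\textsf{---})^\ast\le f(\textsf{---},s)$ and $f(\textsf{---},s)^\ast\le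 f(r,\textsf{---})$ for $r<s$, ordered by $f\le g$ iff $f(r,\textsf{---})\le g(r,\textsf{---})$ and $g(\textsf{---},s)\le f(\textsf{---},s)$; it is a complete lattice with top $\boldsymbol{+\infty}$ ($(r,\textsf{---})\mapsto1$, $(\textsf{---},s)\mapsto0$) and bottom $\boldsymbol{-\infty}$ ($(r,\textsf{---})\mapsto0$, $(\textsf{---},s)\mapsto1$). $\mathrm{F}(L)$ is the set of real-valued $f\in\overline{\mathrm{F}}(L)$, i.e. such that for all $g\in\overline{\mathrm{F}}(L)$, $f\vee g=\boldsymbol{+\infty}\Rightarrow g=\boldsymbol{+\infty}$ and $f\wedge g=\boldsymbol{-\infty}\Rightarrow g=\boldsymbol{-\infty}$. $\overline{\mathrm{LSC}}(L)$ (resp. $\overline{\mathrm{USC}}(L)$) is the set of frame homomorphisms $g\colon\mathfrak{L}(\overline{\mathbb{R}})\to\mathrm{coS}(L)$ with $g(r,\textsf{---})$ closed for all $r$ (resp. $g(\textsf{---},s)$ closed for all $s$). $\mathrm{LSC}(L)$ is the set of frame homomorphisms $f\colon\mathfrak{L}(\overline{\mathbb{R}})\to\mathrm{coS}(L)$ with (l1) $f(r,\textsf{---})$ closed for all $r$, (l2) $\bigvee_r f(r,\textsf{---})=1$, (l3) $\bigwedge_r f(r,\textsf{---})=0$; $\mathrm{USC}(L)$ is defined analogously with $f(\textsf{---},s)$: (u1) $f(\textsf{---},s)$ closed, (u2) $\bigvee_s f(\textsf{---},s)=1$, (u3) $\bigwedge_s f(\textsf{---},s)=0$. All these sets are regarded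 as subsets of $\overline{\mathrm{F}}(L)$. *)

theory Defs
  imports Complex_Main
begin

definition is_frame :: "'a::complete_lattice itself \<Rightarrow> bool" where
  "is_frame _ \<longleftrightarrow> (\<forall>(a::'a) S. inf a (Sup S) = Sup ((inf a) ` S))"

definition himp :: "'a::complete_lattice \<Rightarrow> 'a \<Rightarrow> 'a" where
  "himp x s = Sup {z. inf z x \<le> s}"

section \<open>Sublocales and the frame coS(L) (elements are sets, ordered by reverse inclusion)\<close>

definition is_sublocale :: "'a::complete_lattice set \<Rightarrow> bool" where
  "is_sublocale S \<longleftrightarrow> (\<forall>T. T \<subseteq> S \<longrightarrow> Inf T \<in> S) \<and> (\<forall>x. \<forall>s\<in>S. himp x s \<in> S)"

definition coS_le :: "'a::complete_lattice set \<Rightarrow> 'a set \<Rightarrow> bool" where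
  "coS_le S T \<longleftrightarrow> T \<subseteq> S"

definition coS_bot :: "'a::complete_lattice set" where
  "coS_bot = UNIV"

definition coS_top :: "'a::complete_lattice set" where
  "coS_top = {top}"

definition coS_Sup :: "'a::complete_lattice set set \<Rightarrow> 'a set" where
  "coS_Sup A = \<Inter> A"

definition coS_join :: "'a::complete_lattice set \<Rightarrow> 'a set \<Rightarrow> 'a set" where
  "coS_join S T = coS_Sup {S, T}"

definition coS_Inf :: "'a::complete_lattice set set \<Rightarrow> 'a set" where
  "coS_Inf A = \<Inter> {U. is_sublocale U \<and> \<Union> A \<subseteq> U}"

definition coS_meet :: "'a::complete_lattice set \<Rightarrow> 'a set \<Rightarrow> 'a set" where
  "coS_meet S T = coS_Inf {S, T}"

definition coS_pc :: "'a::complete_lattice set \<Rightarrow> 'a set" where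
  "coS_pc S = coS_Sup {T. is_sublocale T \<and> coS_meet T S = coS_bot}"

definition closed_sub :: "'a::complete_lattice \<Rightarrow> 'a set" where
  "closed_sub a = {x. a \<le> x}"

definition is_closed_sub :: "'a::complete_lattice set \<Rightarrow> bool" where
  "is_closed_sub S \<longleftrightarrow> (\<exists>a. S = closed_sub a)"

text \<open>A frame homomorphism out of a frame given by generators and relations is the same as
  an assignment of the generators respecting the relations. A homomorphism
  f : L(IR-bar) \<rightarrow> coS(L) is thus represented by the pair (fst f, snd f), where
  fst f r = f(r,--) and snd f s = f(--,s).\<close>
type_synonym 'a rfun = "(rat \<Rightarrow> 'a set) \<times> (rat \<Rightarrow> 'a set)"

definition hom_IR :: "'a::complete_lattice rfun \<Rightarrow> bool" where
  "hom_IR f \<longleftrightarrow>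
     (\<forall>r. is_sublocale (fst f r)) \<and> (\<forall>s. is_sublocale (snd f s)) \<and>
     (\<forall>r s. s \<le> r \<longrightarrow> coS_meet (fst f r) (snd f s) = coS_bot) \<and>
     (\<forall>r. fst f r = coS_Sup {fst f s | s. r < s}) \<and>
     (\<forall>s. snd f s = coS_Sup {snd f r | r. r < s})"

definition hom_R :: "'a::complete_lattice rfun \<Rightarrow> bool" where
  "hom_R f \<longleftrightarrow> hom_IR f \<and> (\<forall>r s. r < s \<longrightarrow> coS_join (fst f r) (snd f s) = coS_top)"

definition Fbar :: "'a::complete_lattice rfun set" where
  "Fbar = {f. hom_IR f \<and>
     (\<forall>r s. r < s \<longrightarrow> coS_le (coS_pc (fst f r)) (snd f s) \<and> coS_le (coS_pc (snd f s)) (fst f r))}"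

definition Fle :: "'a::complete_lattice rfun \<Rightarrow> 'a rfun \<Rightarrow> bool" where
  "Fle f g \<longleftrightarrow> (\<forall>r. coS_le (fst f r) (fst g r)) \<and> (\<forall>s. coS_le (snd g s) (snd f s))"

definition plus_inf :: "'a::complete_lattice rfun" where
  "plus_inf = (\<lambda>r. coS_top, \<lambda>s. coS_bot)"

definition minus_inf :: "'a::complete_lattice rfun" where
  "minus_inf = (\<lambda>r. coS_bot, \<lambda>s. coS_top)"

definition is_Fjoin :: "'a::complete_lattice rfun \<Rightarrow> 'a rfun \<Rightarrow> 'a rfun \<Rightarrow> bool" where
  "is_Fjoin f g h \<longleftrightarrow> h \<in> Fbar \<and> Fle f h \<and> Fle g h \<and>
     (\<forall>k\<in>Fbar. Fle f k \<and> Fle g k \<longrightarrow> Fle h k)"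

definition is_Fmeet :: "'a::complete_lattice rfun \<Rightarrow> 'a rfun \<Rightarrow> 'a rfun \<Rightarrow> bool" where
  "is_Fmeet f g h \<longleftrightarrow> h \<in> Fbar \<and> Fle h f \<and> Fle h g \<and>
     (\<forall>k\<in>Fbar. Fle k f \<and> Fle k g \<longrightarrow> Fle k h)"

definition Freal :: "'a::complete_lattice rfun set" where
  "Freal = {f \<in> Fbar. \<forall>g\<in>Fbar.
     (is_Fjoin f g plus_inf \<longrightarrow> g = plus_inf) \<and> (is_Fmeet f g minus_inf \<longrightarrow> g = minus_inf)}"

definition LSCbar :: "'a::complete_lattice rfun set" where
  "LSCbar = {g. hom_R g \<and> (\<forall>r. is_closed_sub (fst g r))}"

definition USCbar :: "'a::complete_lattice rfun set" where
  "USCbar = {g. hom_R g \<and> (\<forall>s. is_closed_sub (snd g s))}"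

definition LSC :: "'a::complete_lattice rfun set" where
  "LSC = {f. hom_R f \<and> (\<forall>r. is_closed_sub (fst f r)) \<and>
     coS_Sup (range (fst f)) = coS_top \<and> coS_Inf (range (fst f)) = coS_bot}"

definition USC :: "'a::complete_lattice rfun set" where
  "USC = {f. hom_R f \<and> (\<forall>s. is_closed_sub (snd f s)) \<and>
     coS_Sup (range (snd f)) = coS_top \<and> coS_Inf (range (snd f)) = coS_bot}"

end

theory Submission imports Defs begin

locale frm =
  fixes dummy :: "'a::complete_lattice itself"
  assumes FR: "is_frame TYPE('a)"
begin

lemma frame_law: "inf (a::'a) (Sup S) = Sup ((inf a) ` S)"
  using FR unfolding is_frame_def by blast

lemma himp_adj: "(z::'a) \<le> himp x s \<longleftrightarrow> inf z x \<le> s"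
proof
  assume "inf z x \<le> s" then show "z \<le> himp x s" unfolding himp_def by (simp add: Sup_upper)
next
  assume z: "z \<le> himp x s"
  have "inf z x \<le> inf x (himp x s)" using z by (simp add: inf.coboundedI1 inf_commute le_infI2)
  also have "\<dots> = Sup ((inf x) ` {z. inf z x \<le> s})" unfolding himp_def by (rule frame_law)
  also have "\<dots> \<le> s" by (auto intro!: Sup_least simp: inf_commute)
  finally show "inf z x \<le> s" .
qed

lemma distrib2: "inf (a::'a) (sup b c) = sup (inf a b) (inf a c)"
  using frame_law[of a "{b,c}"] by simp

lemma himp_eqI: "(\<And>z::'a. z \<le> A \<longleftrightarrow> z \<le> B) \<Longrightarrow> A = B"
  by (meson order.antisym order.refl)

lemma himp_top_iff: "himp x s = (top::'a) \<longleftrightarrow> x \<le> s"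
  using himp_adj[of top x s] by (simp add: top_unique)

lemma le_himp: "(s::'a) \<le> himp x s"
  by (simp add: himp_adj)

lemma inf_himp: "inf (x::'a) (himp x s) \<le> s"
  using himp_adj[of "himp x s" x s] by (simp add: inf_commute)

lemma himp_top_left: "himp top (s::'a) = s"
  by (rule himp_eqI) (simp add: himp_adj)

lemma himp_mono2: "(s::'a) \<le> t \<Longrightarrow> himp x s \<le> himp x t"
  by (meson himp_adj order.trans order.refl)

lemma himp_anti1: "(x::'a) \<le> y \<Longrightarrow> himp y s \<le> himp x s"
  by (metis himp_adj inf_mono order.refl order.trans)

lemma himp_Inf: "himp x (Inf M) = Inf ((\<lambda>m. himp (x::'a) m) ` M)"
  by (rule himp_eqI) (auto simp: himp_adj le_Inf_iff)

lemma himp_himp: "himp (x::'a) (himp y s) = himp (inf x y) s"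
  by (rule himp_eqI) (simp add: himp_adj inf_assoc)

lemma himp_Sup_left: "himp (Sup A) (x::'a) = Inf ((\<lambda>a. himp a x) ` A)"
proof (rule himp_eqI)
  fix z
  have "z \<le> himp (Sup A) x \<longleftrightarrow> Sup (inf z ` A) \<le> x"
    by (simp add: himp_adj frame_law)
  also have "\<dots> \<longleftrightarrow> z \<le> Inf ((\<lambda>a. himp a x) ` A)"
    by (auto simp: Sup_le_iff le_Inf_iff himp_adj)
  finally show "z \<le> himp (Sup A) x \<longleftrightarrow> z \<le> Inf ((\<lambda>a. himp a x) ` A)" .
qed

lemma decomp: "inf (sup (x::'a) a) (himp a x) = x"
proof (rule order.antisym)
  have "inf (himp a x) (sup x a) = sup (inf (himp a x) x) (inf (himp a x) a)" by (rule distrib2)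
  moreover have "inf (himp a x) x \<le> x" by simp
  moreover have "inf (himp a x) a \<le> x" using inf_himp by (simp add: inf_commute)
  ultimately show "inf (sup x a) (himp a x) \<le> x" by (simp add: inf_commute)
  show "x \<le> inf (sup x a) (himp a x)" using le_himp by simp
qed

definition gen :: "'a set \<Rightarrow> 'a set" where
  "gen X = \<Inter> {U. is_sublocale U \<and> X \<subseteq> U}"

definition opn :: "'a \<Rightarrow> 'a set" where
  "opn a = range (himp a)"

definition pc :: "'a set \<Rightarrow> 'a set" where
  "pc X = \<Inter> {T. is_sublocale T \<and> gen (T \<union> X) = UNIV}"

lemma sub_Inf: "is_sublocale S \<Longrightarrow> T \<subseteq> S \<Longrightarrow> Inf T \<in> S"
  unfolding is_sublocale_def by blast

lemma sub_top: "is_sublocale S \<Longrightarrow> (top::'a) \<in> S"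
  using sub_Inf[of S "{}"] by simp

lemma sub_inf: "is_sublocale S \<Longrightarrow> a \<in> S \<Longrightarrow> b \<in> S \<Longrightarrow> inf (a::'a) b \<in> S"
  using sub_Inf[of S "{a,b}"] by simp

lemma sub_himp: "is_sublocale S \<Longrightarrow> s \<in> S \<Longrightarrow> himp x (s::'a) \<in> S"
  unfolding is_sublocale_def by blast

lemma sub_Inter: "(\<And>S. S \<in> SS \<Longrightarrow> is_sublocale S) \<Longrightarrow> is_sublocale (\<Inter> SS :: 'a set)"
  unfolding is_sublocale_def by blast

lemma sub_UNIV: "is_sublocale (UNIV :: 'a set)"
  unfolding is_sublocale_def by blast

lemma sub_topset: "is_sublocale {top :: 'a}"
  unfolding is_sublocale_def
proof (intro conjI allI impI ballI)
  fix T :: "'a set" assume "T \<subseteq> {top}" then show "Inf T \<in> {top}"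
    by (auto simp: Inf_top_conv)
next
  fix x s :: 'a assume "s \<in> {top}" then show "himp x s \<in> {top}"
    using himp_top_iff by simp
qed

lemma sub_closed: "is_sublocale (closed_sub (a::'a))"
  unfolding is_sublocale_def closed_sub_def
proof (intro conjI allI impI ballI)
  fix T assume "T \<subseteq> {x. a \<le> x}" then show "Inf T \<in> {x. a \<le> x}"
    by (auto intro: Inf_greatest)
next
  fix x s assume "s \<in> {x. a \<le> x}" then show "himp x s \<in> {x. a \<le> x}"
    using le_himp[of s x] by simp
qed

lemma opn_iff: "y \<in> opn a \<longleftrightarrow> himp a y = (y::'a)"
  unfolding opn_def using himp_himp by (metis inf.idem rangeE rangeI)

lemma sub_opn: "is_sublocale (opn (a::'a))"
  unfolding is_sublocale_def
proof (intro conjI allI impI ballI)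
  fix T assume T: "T \<subseteq> opn a"
  have "\<forall>t\<in>T. himp a t = t" using T opn_iff by blast
  then have "(himp a) ` T = (\<lambda>t. t) ` T" by (intro image_cong) auto
  then have "himp a (Inf T) = Inf T" unfolding himp_Inf by simp
  then show "Inf T \<in> opn a" by (simp add: opn_iff)
next
  fix x s assume "s \<in> opn a"
  then have s: "himp a s = s" by (simp add: opn_iff)
  have "himp a (himp x s) = himp (inf a x) s" by (rule himp_himp)
  also have "\<dots> = himp (inf x a) s" by (simp add: inf_commute)
  also have "\<dots> = himp x (himp a s)" by (rule himp_himp[symmetric])
  also have "\<dots> = himp x s" using s by simp
  finally show "himp x s \<in> opn a" unfolding opn_iff .
qed

lemma gen_sub: "is_sublocale (gen X)"
  unfolding gen_def by (rule sub_Inter) simp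

lemma gen_upper: "X \<subseteq> gen X"
  unfolding gen_def by blast

lemma gen_least: "X \<subseteq> U \<Longrightarrow> is_sublocale U \<Longrightarrow> gen X \<subseteq> U"
  unfolding gen_def by blast

lemma gen_mono: "X \<subseteq> Y \<Longrightarrow> gen X \<subseteq> gen Y"
  by (meson gen_least gen_sub gen_upper order.trans)

lemma gen_UNIV_mono: "gen X = UNIV \<Longrightarrow> X \<subseteq> Y \<Longrightarrow> gen Y = UNIV"
  using gen_mono by blast

lemma gen_of_sub: "is_sublocale T \<Longrightarrow> gen T = T"
  by (simp add: gen_least gen_upper order.antisym)

definition HH :: "'a set \<Rightarrow> 'a set" where
  "HH X = {himp y u | y u. u \<in> X}"

definition GG :: "'a set \<Rightarrow> 'a set" where
  "GG X = {x. Inf {h \<in> HH X. x \<le> h} \<le> x}"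

lemma GG_eq: "x \<in> GG X \<Longrightarrow> Inf {h \<in> HH X. x \<le> h} = x"
proof -
  assume "x \<in> GG X"
  then have "Inf {h \<in> HH X. x \<le> h} \<le> x" unfolding GG_def by simp
  moreover have "x \<le> Inf {h \<in> HH X. x \<le> h}" by (rule Inf_greatest) simp
  ultimately show ?thesis by (rule order.antisym)
qed

lemma HH_himp: "h \<in> HH X \<Longrightarrow> himp y h \<in> HH X"
proof -
  assume "h \<in> HH X"
  then obtain y' u where h: "h = himp y' u" "u \<in> X" unfolding HH_def by blast
  have "himp y h = himp (inf y y') u" using h(1) by (simp add: himp_himp)
  then show "himp y h \<in> HH X" unfolding HH_def using h(2) by blast
qed

lemma sub_GG: "is_sublocale (GG X)"
  unfolding is_sublocale_def
proof (intro conjI allI impI ballI)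
  fix T assume T: "T \<subseteq> GG X"
  have "Inf {h \<in> HH X. Inf T \<le> h} \<le> t" if "t \<in> T" for t
  proof -
    have "Inf {h \<in> HH X. Inf T \<le> h} \<le> Inf {h \<in> HH X. t \<le> h}"
    proof (rule Inf_superset_mono)
      have it: "Inf T \<le> t" using that by (rule Inf_lower)
      show "{h \<in> HH X. t \<le> h} \<subseteq> {h \<in> HH X. Inf T \<le> h}"
        by (auto intro: order.trans[OF it])
    qed
    also have "\<dots> \<le> t" using subsetD[OF T that] unfolding GG_def by simp
    finally show ?thesis .
  qed
  then show "Inf T \<in> GG X" unfolding GG_def by (auto intro: Inf_greatest)
next
  fix y s assume s: "s \<in> GG X"
  let ?M = "{h \<in> HH X. s \<le> h}"
  have "himp y s = himp y (Inf ?M)" using GG_eq[OF s] by simp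
  then have "himp y s = Inf ((himp y) ` ?M)" by (simp add: himp_Inf)
  moreover have "(himp y) ` ?M \<subseteq> {h \<in> HH X. himp y s \<le> h}"
  proof (rule image_subsetI)
    fix h assume "h \<in> ?M"
    then show "himp y h \<in> {h \<in> HH X. himp y s \<le> h}"
      using HH_himp[of h X y] himp_mono2[of s h y] by simp
  qed
  ultimately have "Inf {h \<in> HH X. himp y s \<le> h} \<le> himp y s"
    by (simp add: Inf_superset_mono)
  then show "himp y s \<in> GG X" unfolding GG_def by simp
qed

lemma GG_upper: "X \<subseteq> GG X"
proof
  fix u assume "u \<in> X"
  have "\<exists>y v. u = himp y v \<and> v \<in> X" using \<open>u \<in> X\<close> himp_top_left[of u] by (intro exI[of _ top] exI[of _ u]) simp
  then have "u \<in> {h \<in> HH X. u \<le> h}" unfolding HH_def by simp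
  then show "u \<in> GG X" unfolding GG_def by (simp add: Inf_lower)
qed

lemma gen_GG: "x \<in> gen X \<Longrightarrow> x \<in> GG X"
  using gen_least[OF GG_upper sub_GG] by blast

lemma meetjoin:
  assumes A: "is_sublocale A" and B: "\<And>B. B \<in> BB \<Longrightarrow> is_sublocale B"
    and x: "\<And>B. B \<in> BB \<Longrightarrow> x \<in> gen (A \<union> B)"
  shows "x \<in> gen (A \<union> \<Inter> BB)"
proof -
  define \<nu> where "\<nu> = Inf {a \<in> A. x \<le> a}"
  have nuA: "\<nu> \<in> A" unfolding \<nu>_def by (rule sub_Inf[OF A]) auto
  have xnu: "x \<le> \<nu>" unfolding \<nu>_def by (rule Inf_greatest) auto
  define w where "w = himp \<nu> x"
  have xw: "x = inf \<nu> w"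
  proof (rule order.antisym)
    show "x \<le> inf \<nu> w" unfolding w_def using xnu le_himp by (rule le_infI)
    show "inf \<nu> w \<le> x" unfolding w_def by (rule inf_himp)
  qed
  have wB: "w \<in> B" if BB: "B \<in> BB" for B
  proof -
    let ?M = "{h \<in> HH (A \<union> B). x \<le> h}"
    have "x = Inf ?M" using GG_eq[OF gen_GG[OF x[OF BB]]] by simp
    then have "w = himp \<nu> (Inf ?M)" unfolding w_def by simp
    then have "w = Inf ((himp \<nu>) ` ?M)" by (simp add: himp_Inf)
    moreover have "(himp \<nu>) ` ?M \<subseteq> B"
    proof
      fix z assume "z \<in> (himp \<nu>) ` ?M"
      then obtain h y u where z: "z = himp \<nu> h" and h: "h = himp y u" "u \<in> A \<union> B" "x \<le> h"
        unfolding HH_def by blast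
      show "z \<in> B"
      proof (cases "u \<in> A")
        case True
        then have hA: "h \<in> A" using h(1) sub_himp[OF A True] by simp
        have "\<nu> \<le> h" unfolding \<nu>_def by (rule Inf_lower) (use hA h(3) in simp)
        then have "z = top" using z himp_top_iff by simp
        then show ?thesis using sub_top[OF B[OF BB]] by simp
      next
        case False
        then have "u \<in> B" using h by blast
        then have "h \<in> B" using h(1) sub_himp[OF B[OF BB]] by simp
        then show ?thesis using z sub_himp[OF B[OF BB]] by simp
      qed
    qed
    ultimately show ?thesis using sub_Inf[OF B[OF BB]] by simp
  qed
  have g1: "\<nu> \<in> gen (A \<union> \<Inter> BB)" by (rule subsetD[OF gen_upper]) (simp add: nuA)
  have g2: "w \<in> gen (A \<union> \<Inter> BB)" by (rule subsetD[OF gen_upper]) (use wB in blast)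
  show ?thesis using sub_inf[OF gen_sub g1 g2] xw by simp
qed


lemma coS_meet_eq: "coS_meet S T = gen (S \<union> T)"
  unfolding coS_meet_def coS_Inf_def gen_def by simp

lemma coS_Inf_eq: "coS_Inf A = gen (\<Union> A)"
  unfolding coS_Inf_def gen_def by simp

lemma coS_pc_eq: "coS_pc S = pc S"
  unfolding coS_pc_def pc_def coS_Sup_def coS_meet_eq coS_bot_def by simp

lemma pc_sub: "is_sublocale (pc X)"
  unfolding pc_def by (rule sub_Inter) simp

lemma pc_upper: "is_sublocale T \<Longrightarrow> gen (T \<union> X) = UNIV \<Longrightarrow> pc X \<subseteq> T"
  unfolding pc_def by blast

lemma pc_greatest: "(\<And>T. is_sublocale T \<Longrightarrow> gen (T \<union> X) = UNIV \<Longrightarrow> Y \<subseteq> T) \<Longrightarrow> Y \<subseteq> pc X"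
  unfolding pc_def by blast

lemma meet_pc: assumes X: "is_sublocale X" shows "gen (X \<union> pc X) = UNIV"
proof -
  have "x \<in> gen (X \<union> pc X)" for x
    unfolding pc_def
  proof (rule meetjoin[OF X])
    fix B assume "B \<in> {T. is_sublocale T \<and> gen (T \<union> X) = UNIV}"
    then show "is_sublocale B" "x \<in> gen (X \<union> B)" by (auto simp: Un_commute)
  qed
  then show ?thesis by blast
qed

lemma pc_anti: "A \<subseteq> B \<Longrightarrow> pc B \<subseteq> pc A"
proof (rule pc_greatest)
  fix T assume AB: "A \<subseteq> B" and T: "is_sublocale T" "gen (T \<union> A) = UNIV"
  have "gen (T \<union> B) = UNIV" using gen_UNIV_mono[OF T(2)] AB by blast
  then show "pc B \<subseteq> T" using pc_upper[OF T(1)] by blast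
qed

lemma pc_pc: "is_sublocale X \<Longrightarrow> pc (pc X) \<subseteq> X"
  by (rule pc_upper) (auto simp: meet_pc)

lemma pc3: "is_sublocale Y \<Longrightarrow> pc Y \<subseteq> pc (pc (pc Y))"
  by (rule pc_anti) (rule pc_pc)

lemma gen_with_top: "is_sublocale T \<Longrightarrow> gen (T \<union> {top}) = T"
  using gen_least[of "T \<union> {top}" T] sub_top gen_upper[of "T \<union> {top}"] by blast

lemma pc_UNIV: "pc (UNIV :: 'a set) = {top}"
proof
  show "pc UNIV \<subseteq> {top}" using pc_upper[OF sub_topset, of UNIV] gen_upper[of "{top} \<union> UNIV"] by blast
  show "{top} \<subseteq> pc UNIV" using sub_top[OF pc_sub] by blast
qed

lemma pc_top: "pc {top :: 'a} = UNIV"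
proof -
  have "UNIV \<subseteq> pc {top :: 'a}"
  proof (rule pc_greatest)
    fix T :: "'a set" assume "is_sublocale T" "gen (T \<union> {top}) = UNIV"
    then show "UNIV \<subseteq> T" using gen_with_top by simp
  qed
  then show ?thesis by blast
qed

lemma split_lem:
  assumes T: "is_sublocale T" and C: "is_sublocale C" and D: "is_sublocale D"
    and CD: "C \<inter> D \<subseteq> {top}" and x1: "x \<in> gen (T \<union> C)" and x2: "x \<in> gen (T \<union> D)"
  shows "x \<in> T"
proof -
  have "x \<in> gen (T \<union> \<Inter> {C, D})"
    by (rule meetjoin[OF T]) (use C D x1 x2 in auto)
  also have "\<dots> \<subseteq> gen (T \<union> {top})" using CD by (intro gen_mono) auto
  also have "\<dots> = T" using gen_with_top[OF T] .
  finally show ?thesis .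
qed

lemma oc_inter: "opn a \<inter> closed_sub a \<subseteq> {top :: 'a}"
proof
  fix x assume "x \<in> opn a \<inter> closed_sub a"
  then have "himp a x = x" "a \<le> x" by (auto simp: opn_iff closed_sub_def)
  then show "x \<in> {top}" using himp_top_iff by force
qed

lemma oc_meet: "gen (opn a \<union> closed_sub a) = (UNIV :: 'a set)"
proof -
  have "x \<in> gen (opn a \<union> closed_sub a)" for x :: 'a
  proof -
    have "sup x a \<in> gen (opn a \<union> closed_sub a)"
      by (rule subsetD[OF gen_upper]) (simp add: closed_sub_def)
    moreover have "himp a x \<in> gen (opn a \<union> closed_sub a)"
      by (rule subsetD[OF gen_upper]) (simp add: opn_def)
    ultimately show ?thesis using sub_inf[OF gen_sub] decomp[of x a] by metis
  qed
  then show ?thesis by blast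
qed

lemma CL_lem: assumes T: "is_sublocale T" and G: "gen (T \<union> opn a) = UNIV"
  shows "closed_sub a \<subseteq> T"
proof
  fix x assume x: "x \<in> closed_sub a"
  show "x \<in> T"
  proof (rule split_lem[OF T sub_opn sub_closed oc_inter])
    show "x \<in> gen (T \<union> opn a)" using G by simp
    show "x \<in> gen (T \<union> closed_sub a)" using x gen_upper by blast
  qed
qed

lemma OPEN_lem: assumes B: "is_sublocale B" and G: "gen (closed_sub a \<union> B) = UNIV"
  shows "opn a \<subseteq> B"
proof
  fix x assume x: "x \<in> opn a"
  show "x \<in> B"
  proof (rule split_lem[OF B sub_closed sub_opn])
    show "closed_sub a \<inter> opn a \<subseteq> {top}" using oc_inter by blast
    show "x \<in> gen (B \<union> closed_sub a)" using G by (simp add: Un_commute)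
    show "x \<in> gen (B \<union> opn a)" using x gen_upper by blast
  qed
qed

lemma R2O_lem: assumes B: "is_sublocale B" and I: "closed_sub a \<inter> B \<subseteq> {top}"
  shows "B \<subseteq> opn a"
proof
  fix b assume b: "b \<in> B"
  define w where "w = himp (himp a b) b"
  have wB: "w \<in> B" unfolding w_def using sub_himp[OF B b] .
  have "a \<le> w" unfolding w_def himp_adj using inf_himp by (simp add: inf_commute)
  then have "w = top" using wB I by (auto simp: closed_sub_def)
  then have "himp a b \<le> b" unfolding w_def using himp_top_iff by simp
  then have "himp a b = b" using le_himp by (simp add: order.antisym)
  then show "b \<in> opn a" by (simp add: opn_iff)
qed

lemma compl_lem:
  assumes C: "is_sublocale C" and D: "is_sublocale D" and G: "is_sublocale G"
    and CD: "C \<inter> D \<subseteq> {top}"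
  shows "D \<inter> pc G \<subseteq> pc (gen (C \<union> G))"
proof (rule pc_greatest)
  fix T assume T: "is_sublocale T" and TU: "gen (T \<union> gen (C \<union> G)) = UNIV"
  have TC: "is_sublocale (gen (T \<union> C))" by (rule gen_sub)
  have "gen (T \<union> gen (C \<union> G)) \<subseteq> gen (gen (T \<union> C) \<union> G)"
  proof (rule gen_least[OF _ gen_sub])
    have "gen (C \<union> G) \<subseteq> gen (gen (T \<union> C) \<union> G)"
    proof (rule gen_least[OF _ gen_sub])
      show "C \<union> G \<subseteq> gen (gen (T \<union> C) \<union> G)"
        using gen_upper[of "T \<union> C"] gen_upper[of "gen (T \<union> C) \<union> G"] by blast
    qed
    then show "T \<union> gen (C \<union> G) \<subseteq> gen (gen (T \<union> C) \<union> G)"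
      using gen_upper[of "T \<union> C"] gen_upper[of "gen (T \<union> C) \<union> G"] by blast
  qed
  then have "gen (gen (T \<union> C) \<union> G) = UNIV" using TU by blast
  then have pcG: "pc G \<subseteq> gen (T \<union> C)" by (rule pc_upper[OF TC])
  show "D \<inter> pc G \<subseteq> T"
  proof
    fix x assume x: "x \<in> D \<inter> pc G"
    show "x \<in> T"
    proof (rule split_lem[OF T C D CD])
      show "x \<in> gen (T \<union> C)" using x pcG by blast
      show "x \<in> gen (T \<union> D)" using x gen_upper by blast
    qed
  qed
qed

lemma dir_lem:
  assumes A: "\<And>t. t \<in> I \<Longrightarrow> is_sublocale (A t)" and B: "\<And>t. t \<in> I \<Longrightarrow> is_sublocale (B t)"
    and x: "\<And>t u. t \<in> I \<Longrightarrow> u \<in> I \<Longrightarrow> x \<in> gen (A t \<union> B u)"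
  shows "x \<in> gen (\<Inter> (A ` I) \<union> \<Inter> (B ` I))"
proof -
  have 1: "x \<in> gen (B u \<union> \<Inter> (A ` I))" if u: "u \<in> I" for u
    by (rule meetjoin[OF B[OF u]]) (use A x u in \<open>auto simp: Un_commute\<close>)
  have AI: "is_sublocale (\<Inter> (A ` I))" by (rule sub_Inter) (use A in auto)
  show ?thesis
    by (rule meetjoin[OF AI]) (use B 1 in \<open>auto simp: Un_commute\<close>)
qed

lemma closed_Inter: "\<Inter> ((\<lambda>r. closed_sub (a r)) ` I) = closed_sub (Sup (a ` I) :: 'a)"
  unfolding closed_sub_def by (auto simp: Sup_le_iff)

lemma closed_le: "closed_sub a \<subseteq> closed_sub b \<Longrightarrow> (b::'a) \<le> a"
  unfolding closed_sub_def by auto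

lemma opn_mono: assumes "(b::'a) \<le> a" shows "opn b \<subseteq> opn a"
proof
  fix x assume "x \<in> opn b"
  then have x: "himp b x = x" by (simp add: opn_iff)
  have "himp a x = himp a (himp b x)" using x by simp
  also have "\<dots> = himp (inf a b) x" by (rule himp_himp)
  also have "inf a b = b" using assms by (simp add: inf_absorb2)
  finally show "x \<in> opn a" using x by (simp add: opn_iff)
qed

lemma opn_Sup_top: assumes "Sup (range a) = (top::'a)"
  shows "gen (\<Union>r. opn (a r)) = UNIV"
proof -
  have "x \<in> gen (\<Union>r. opn (a r))" for x
  proof -
    have "x = himp (Sup (range a)) x" using assms himp_top_left by simp
    also have "\<dots> = Inf ((\<lambda>b. himp b x) ` range a)" by (rule himp_Sup_left)
    finally have xe: "x = Inf ((\<lambda>b. himp b x) ` range a)" .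
    have "(\<lambda>b. himp b x) ` range a \<subseteq> gen (\<Union>r. opn (a r))"
      using gen_upper[of "\<Union>r. opn (a r)"] by (auto simp: opn_def)
    then show ?thesis using xe sub_Inf[OF gen_sub] by metis
  qed
  then show ?thesis by blast
qed



end

context frm
begin

lemma sub_Int: "is_sublocale A \<Longrightarrow> is_sublocale B \<Longrightarrow> is_sublocale (A \<inter> (B::'a set))"
  using sub_Inter[of "{A, B}"] by auto

lemma const_up: "{X |s::rat. r < s} = {X}"
  by (auto intro: exI[of _ "r + 1"])

lemma const_down: "{X |r::rat. r < s} = {X}"
  by (auto intro: exI[of _ "s - 1"])

lemma homIR_D:
  assumes "hom_IR (f :: 'a rfun)"
  shows "is_sublocale (fst f r)" "is_sublocale (snd f s)"
    "s \<le> r \<Longrightarrow> gen (fst f r \<union> snd f s) = UNIV"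
    "fst f r = \<Inter> {fst f t |t. r < t}" "snd f s = \<Inter> {snd f t |t. t < s}"
proof -
  have H: "(\<forall>r. is_sublocale (fst f r)) \<and> (\<forall>s. is_sublocale (snd f s)) \<and>
     (\<forall>r s. s \<le> r \<longrightarrow> gen (fst f r \<union> snd f s) = UNIV) \<and>
     (\<forall>r. fst f r = \<Inter> {fst f s | s. r < s}) \<and>
     (\<forall>s. snd f s = \<Inter> {snd f r | r. r < s})"
    using assms[unfolded hom_IR_def coS_meet_eq coS_bot_def coS_Sup_def] .
  show "is_sublocale (fst f r)" by (rule conjunct1[OF H, rule_format])
  show "is_sublocale (snd f s)" by (rule conjunct1[OF conjunct2[OF H], rule_format])
  show "s \<le> r \<Longrightarrow> gen (fst f r \<union> snd f s) = UNIV"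
    by (rule conjunct1[OF conjunct2[OF conjunct2[OF H]], rule_format])
  show "fst f r = \<Inter> {fst f t |t. r < t}"
    by (rule conjunct1[OF conjunct2[OF conjunct2[OF conjunct2[OF H]]], rule_format])
  show "snd f s = \<Inter> {snd f t |t. t < s}"
    by (rule conjunct2[OF conjunct2[OF conjunct2[OF conjunct2[OF H]]], rule_format])
qed

lemma fst_mono: "hom_IR (f :: 'a rfun) \<Longrightarrow> r \<le> t \<Longrightarrow> fst f r \<subseteq> fst f t"
proof (cases "r = t")
  case False
  assume "hom_IR f" "r \<le> t"
  then have "fst f t \<in> {fst f t' |t'. r < t'}" using False by auto
  then show ?thesis by (subst homIR_D(4)[OF \<open>hom_IR f\<close>, of r]) (rule Inter_lower)
qed simp

lemma snd_mono: "hom_IR (f :: 'a rfun) \<Longrightarrow> t \<le> s \<Longrightarrow> snd f s \<subseteq> snd f t"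
proof (cases "s = t")
  case False
  assume "hom_IR f" "t \<le> s"
  then have "snd f t \<in> {snd f t' |t'. t' < s}" using False by auto
  then show ?thesis by (subst homIR_D(5)[OF \<open>hom_IR f\<close>, of s]) (rule Inter_lower)
qed simp

lemma homR_D: "hom_R (f :: 'a rfun) \<Longrightarrow> r < s \<Longrightarrow> fst f r \<inter> snd f s = {top}"
  unfolding hom_R_def coS_join_def coS_Sup_def coS_top_def by auto

lemma Fbar_D:
  assumes "(f :: 'a rfun) \<in> Fbar" "r < s"
  shows "snd f s \<subseteq> pc (fst f r)" "fst f r \<subseteq> pc (snd f s)"
  using assms unfolding Fbar_def coS_le_def coS_pc_eq by auto

lemma Fbar_I:
  assumes "hom_IR (f :: 'a rfun)"
    and "\<And>r s. r < s \<Longrightarrow> snd f s \<subseteq> pc (fst f r)"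
    and "\<And>r s. r < s \<Longrightarrow> fst f r \<subseteq> pc (snd f s)"
  shows "f \<in> Fbar"
  using assms unfolding Fbar_def coS_le_def coS_pc_eq by auto

lemma homIR_I:
  assumes "\<And>r. is_sublocale (fst f r)" "\<And>s. is_sublocale (snd f s)"
    "\<And>r s. s \<le> r \<Longrightarrow> gen (fst f r \<union> snd f s) = UNIV"
    "\<And>r. fst f r = \<Inter> {fst f t |t. r < t}" "\<And>s. snd f s = \<Inter> {snd f t |t. t < s}"
  shows "hom_IR (f :: 'a rfun)"
  unfolding hom_IR_def coS_meet_eq coS_bot_def coS_Sup_def
  by (intro conjI allI impI) (rule assms | assumption)+

lemma Fle_iff: "Fle f g \<longleftrightarrow> (\<forall>r. fst g r \<subseteq> fst f r) \<and> (\<forall>s. snd f s \<subseteq> snd g s)"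
  unfolding Fle_def coS_le_def by simp

lemma pc_closed: "opn a \<subseteq> pc (closed_sub (a::'a))"
  by (rule pc_greatest) (rule OPEN_lem, auto simp: Un_commute)

lemma pc_opn: "closed_sub a \<subseteq> pc (opn (a::'a))"
  by (rule pc_greatest) (rule CL_lem)

lemma gen_UNIV: "gen (UNIV :: 'a set) = UNIV"
  by (rule gen_of_sub[OF sub_UNIV])

lemma plus_Fbar: "(plus_inf :: 'a rfun) \<in> Fbar"
proof (rule Fbar_I)
  show "hom_IR (plus_inf :: 'a rfun)"
    by (rule homIR_I) (simp_all add: plus_inf_def coS_top_def coS_bot_def sub_topset sub_UNIV
        const_up const_down gen_UNIV gt_ex lt_ex)
qed (simp_all add: plus_inf_def coS_top_def coS_bot_def pc_top pc_UNIV)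

lemma minus_Fbar: "(minus_inf :: 'a rfun) \<in> Fbar"
proof (rule Fbar_I)
  show "hom_IR (minus_inf :: 'a rfun)"
    by (rule homIR_I) (simp_all add: minus_inf_def coS_top_def coS_bot_def sub_topset sub_UNIV
        const_up const_down gen_UNIV gt_ex lt_ex)
qed (simp_all add: minus_inf_def coS_top_def coS_bot_def pc_top pc_UNIV sub_top[OF pc_sub])

lemma gen_Un1: "A \<subseteq> gen (A \<union> B)"
  using gen_upper by blast

lemma gen_Un2: "B \<subseteq> gen (A \<union> B)"
  using gen_upper by blast

lemma setcomp_img: "{F t |t. P t} = F ` {t. P t}"
  by blast

lemma hom_R_IR: "hom_R f \<Longrightarrow> hom_IR f"
  unfolding hom_R_def by simp

lemma Fbar_IR: "f \<in> Fbar \<Longrightarrow> hom_IR f"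
  unfolding Fbar_def by simp

context
  fixes f :: "'a rfun" and a :: "rat \<Rightarrow> 'a"
  assumes hR: "hom_R f" and cl: "\<And>r. fst f r = closed_sub (a r)"
begin

lemma hI: "hom_IR f" using hR by (rule hom_R_IR)

lemma lsc1: "r < s \<Longrightarrow> snd f s \<subseteq> opn (a r)"
  by (rule R2O_lem[OF homIR_D(2)[OF hI]]) (use homR_D[OF hR, of r s] cl in simp)

lemma lsc2: "opn (a s) \<subseteq> snd f s"
  by (rule OPEN_lem[OF homIR_D(2)[OF hI]]) (use homIR_D(3)[OF hI, of s s] cl in simp)

lemma lsc3: "r < t \<Longrightarrow> a t \<le> a r"
  by (rule closed_le) (use fst_mono[OF hI, of r t] cl in simp)

lemma lsc_Fbar: "f \<in> Fbar"
proof (rule Fbar_I[OF hI])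
  fix r s :: rat assume rs: "r < s"
  show "snd f s \<subseteq> pc (fst f r)" using lsc1[OF rs] pc_closed[of "a r"] cl by simp
  show "fst f r \<subseteq> pc (snd f s)"
  proof (rule pc_greatest)
    fix T assume T: "is_sublocale T" "gen (T \<union> snd f s) = UNIV"
    have "gen (T \<union> opn (a r)) = UNIV" by (rule gen_UNIV_mono[OF T(2)]) (use lsc1[OF rs] in blast)
    then show "fst f r \<subseteq> T" using CL_lem[OF T(1)] cl by simp
  qed
qed

lemma D1:
  assumes l3: "gen (\<Union>r. fst f r) = UNIV" and g: "g \<in> Fbar" and J: "is_Fjoin f g plus_inf"
  shows "g = plus_inf"
proof -
  have fF: "f \<in> Fbar" by (rule lsc_Fbar)
  have gI: "hom_IR g" using g by (rule Fbar_IR)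
  define k :: "'a rfun" where "k = ((\<lambda>r. fst f r \<inter> fst g r), (\<lambda>s. gen (snd f s \<union> snd g s)))"
  have kF: "k \<in> Fbar"
  proof (rule Fbar_I)
    show "hom_IR k"
    proof (rule homIR_I)
      fix r show "is_sublocale (fst k r)" unfolding k_def
        by (simp add: sub_Int homIR_D(1)[OF hI] homIR_D(1)[OF gI])
    next
      fix s show "is_sublocale (snd k s)" unfolding k_def by (simp add: gen_sub)
    next
      fix r s :: rat assume sr: "s \<le> r"
      have "x \<in> gen (gen (snd f s \<union> snd g s) \<union> \<Inter>{fst f r, fst g r})" for x
      proof (rule meetjoin[OF gen_sub])
        fix B assume B: "B \<in> {fst f r, fst g r}"
        then show "is_sublocale B" using homIR_D(1)[OF hI] homIR_D(1)[OF gI] by auto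
        have u1: "snd f s \<subseteq> gen (snd f s \<union> snd g s)" "snd g s \<subseteq> gen (snd f s \<union> snd g s)"
          using gen_upper by blast+
        have "gen (gen (snd f s \<union> snd g s) \<union> fst f r) = UNIV"
          by (rule gen_UNIV_mono[OF homIR_D(3)[OF hI sr]]) (use u1 in blast)
        moreover have "gen (gen (snd f s \<union> snd g s) \<union> fst g r) = UNIV"
          by (rule gen_UNIV_mono[OF homIR_D(3)[OF gI sr]]) (use u1 in blast)
        ultimately show "x \<in> gen (gen (snd f s \<union> snd g s) \<union> B)" using B by auto
      qed
      then show "gen (fst k r \<union> snd k s) = UNIV" unfolding k_def by (auto simp: Un_commute)
    next
      fix r :: rat
      have "fst f r \<inter> fst g r = \<Inter>{fst f t \<inter> fst g t |t. r < t}"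
      proof
        show "fst f r \<inter> fst g r \<subseteq> \<Inter>{fst f t \<inter> fst g t |t. r < t}"
        proof (rule Inter_greatest)
          fix X assume "X \<in> {fst f t \<inter> fst g t |t. r < t}"
          then obtain t where t: "r < t" "X = fst f t \<inter> fst g t" by blast
          show "fst f r \<inter> fst g r \<subseteq> X" unfolding t(2)
            using fst_mono[OF hI, of r t] fst_mono[OF gI, of r t] t(1) by auto
        qed
        show "\<Inter>{fst f t \<inter> fst g t |t. r < t} \<subseteq> fst f r \<inter> fst g r"
        proof
          fix x assume x: "x \<in> \<Inter>{fst f t \<inter> fst g t |t. r < t}"
          have "x \<in> \<Inter>{fst f t |t. r < t}" using x by blast
          then have 1: "x \<in> fst f r" by (subst homIR_D(4)[OF hI])
          have "x \<in> \<Inter>{fst g t |t. r < t}" using x by blast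
          then have 2: "x \<in> fst g r" by (subst homIR_D(4)[OF gI])
          show "x \<in> fst f r \<inter> fst g r" using 1 2 by blast
        qed
      qed
      then show "fst k r = \<Inter>{fst k t |t. r < t}" unfolding k_def by simp
    next
      fix s :: rat
      have "gen (snd f s \<union> snd g s) = \<Inter>{gen (snd f t \<union> snd g t) |t. t < s}"
      proof
        show "gen (snd f s \<union> snd g s) \<subseteq> \<Inter>{gen (snd f t \<union> snd g t) |t. t < s}"
        proof (rule Inter_greatest)
          fix X assume "X \<in> {gen (snd f t \<union> snd g t) |t. t < s}"
          then obtain t where t: "t < s" "X = gen (snd f t \<union> snd g t)" by blast
          show "gen (snd f s \<union> snd g s) \<subseteq> X" unfolding t(2)
            using snd_mono[OF hI, of t s] snd_mono[OF gI, of t s] t(1)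
            by (intro gen_mono) auto
        qed
        show "\<Inter>{gen (snd f t \<union> snd g t) |t. t < s} \<subseteq> gen (snd f s \<union> snd g s)"
        proof
          fix x assume x: "x \<in> \<Inter>{gen (snd f t \<union> snd g t) |t. t < s}"
          have "x \<in> gen (\<Inter>(snd f ` {t. t < s}) \<union> \<Inter>(snd g ` {t. t < s}))"
          proof (rule dir_lem)
            fix t u assume tu: "t \<in> {t. t < s}" "u \<in> {t. t < s}"
            define m where "m = max t u"
            have m: "m < s" "t \<le> m" "u \<le> m" using tu unfolding m_def by auto
            have "x \<in> gen (snd f m \<union> snd g m)" using x m(1) by blast
            also have "\<dots> \<subseteq> gen (snd f t \<union> snd g u)"
              using snd_mono[OF hI m(2)] snd_mono[OF gI m(3)] by (intro gen_mono) auto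
            finally show "x \<in> gen (snd f t \<union> snd g u)" .
          qed (use homIR_D(2)[OF hI] homIR_D(2)[OF gI] in auto)
          also have "\<Inter>(snd f ` {t. t < s}) = snd f s"
            using homIR_D(5)[OF hI, of s] by (simp only: setcomp_img)
          also have "\<Inter>(snd g ` {t. t < s}) = snd g s"
            using homIR_D(5)[OF gI, of s] by (simp only: setcomp_img)
          finally show "x \<in> gen (snd f s \<union> snd g s)" .
        qed
      qed
      then show "snd k s = \<Inter>{snd k t |t. t < s}" unfolding k_def by simp
    qed
  next
    fix r s :: rat assume rs: "r < s"
    have "snd f s \<union> snd g s \<subseteq> pc (fst f r \<inter> fst g r)"
      using Fbar_D(1)[OF fF rs] Fbar_D(1)[OF g rs] pc_anti[of "fst f r \<inter> fst g r" "fst f r"]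
        pc_anti[of "fst f r \<inter> fst g r" "fst g r"] by blast
    then show "snd k s \<subseteq> pc (fst k r)" unfolding k_def by (simp add: gen_least pc_sub)
  next
    fix r s :: rat assume rs: "r < s"
    have c1: "closed_sub (a r) \<inter> pc (snd g s) \<subseteq> pc (gen (opn (a r) \<union> snd g s))"
      by (rule compl_lem[OF sub_opn sub_closed homIR_D(2)[OF gI] oc_inter])
    have c2: "pc (gen (opn (a r) \<union> snd g s)) \<subseteq> pc (gen (snd f s \<union> snd g s))"
      by (rule pc_anti, rule gen_mono) (use lsc1[OF rs] in blast)
    have "fst f r \<inter> fst g r \<subseteq> pc (gen (snd f s \<union> snd g s))"
      using c1 c2 Fbar_D(2)[OF g rs] cl[of r] by blast
    then show "fst k r \<subseteq> pc (snd k s)" unfolding k_def by simp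
  qed
  have "Fle f k" unfolding Fle_iff k_def by (simp add: gen_Un1)
  moreover have "Fle g k" unfolding Fle_iff k_def by (simp add: gen_Un2)
  ultimately have "Fle plus_inf k" using J kF unfolding is_Fjoin_def by blast
  then have hk: "gen (snd f s \<union> snd g s) = UNIV" for s
    unfolding Fle_iff k_def plus_inf_def coS_bot_def by auto
  have sg: "snd g s = UNIV" for s
  proof -
    have "fst f r \<subseteq> snd g s" for r
    proof -
      define t where "t = max s (r + 1)"
      have t: "r < t" "s \<le> t" unfolding t_def by auto
      have "gen (snd g t \<union> opn (a r)) = UNIV"
        by (rule gen_UNIV_mono[OF hk[of t]]) (use lsc1[OF t(1)] in blast)
      then have "closed_sub (a r) \<subseteq> snd g t" by (rule CL_lem[OF homIR_D(2)[OF gI]])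
      then show ?thesis using snd_mono[OF gI t(2)] cl[of r] by simp
    qed
    then have "gen (\<Union>r. fst f r) \<subseteq> snd g s" by (intro gen_least homIR_D(2)[OF gI]) blast
    then show ?thesis using l3 by blast
  qed
  have fg: "fst g r = {top}" for r
  proof -
    have "fst g r \<subseteq> pc (snd g (r + 1))" by (rule Fbar_D(2)[OF g]) simp
    then have "fst g r \<subseteq> {top}" using sg pc_UNIV by simp
    then show ?thesis using sub_top[OF homIR_D(1)[OF gI]] by blast
  qed
  show "g = plus_inf" unfolding plus_inf_def coS_top_def coS_bot_def
    by (rule prod_eqI) (simp_all add: fun_eq_iff fg sg)
qed

lemma D2:
  assumes l2: "Sup (range a) = top" and g: "g \<in> Fbar" and M: "is_Fmeet f g minus_inf"
  shows "g = minus_inf"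
proof -
  have fF: "f \<in> Fbar" by (rule lsc_Fbar)
  have gI: "hom_IR g" using g by (rule Fbar_IR)
  define k :: "'a rfun" where "k = ((\<lambda>r. gen (fst f r \<union> fst g r)), (\<lambda>s. snd f s \<inter> snd g s))"
  have kF: "k \<in> Fbar"
  proof (rule Fbar_I)
    show "hom_IR k"
    proof (rule homIR_I)
      fix r show "is_sublocale (fst k r)" unfolding k_def by (simp add: gen_sub)
    next
      fix s show "is_sublocale (snd k s)" unfolding k_def
        by (simp add: sub_Int homIR_D(2)[OF hI] homIR_D(2)[OF gI])
    next
      fix r s :: rat assume sr: "s \<le> r"
      have "x \<in> gen (gen (fst f r \<union> fst g r) \<union> \<Inter>{snd f s, snd g s})" for x
      proof (rule meetjoin[OF gen_sub])
        fix B assume B: "B \<in> {snd f s, snd g s}"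
        then show "is_sublocale B" using homIR_D(2)[OF hI] homIR_D(2)[OF gI] by auto
        have u1: "fst f r \<subseteq> gen (fst f r \<union> fst g r)" "fst g r \<subseteq> gen (fst f r \<union> fst g r)"
          using gen_upper by blast+
        have "gen (gen (fst f r \<union> fst g r) \<union> snd f s) = UNIV"
          by (rule gen_UNIV_mono[OF homIR_D(3)[OF hI sr]]) (use u1 in blast)
        moreover have "gen (gen (fst f r \<union> fst g r) \<union> snd g s) = UNIV"
          by (rule gen_UNIV_mono[OF homIR_D(3)[OF gI sr]]) (use u1 in blast)
        ultimately show "x \<in> gen (gen (fst f r \<union> fst g r) \<union> B)" using B by auto
      qed
      then show "gen (fst k r \<union> snd k s) = UNIV" unfolding k_def by auto
    next
      fix r :: rat
      have "gen (fst f r \<union> fst g r) = \<Inter>{gen (fst f t \<union> fst g t) |t. r < t}"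
      proof
        show "gen (fst f r \<union> fst g r) \<subseteq> \<Inter>{gen (fst f t \<union> fst g t) |t. r < t}"
        proof (rule Inter_greatest)
          fix X assume "X \<in> {gen (fst f t \<union> fst g t) |t. r < t}"
          then obtain t where t: "r < t" "X = gen (fst f t \<union> fst g t)" by blast
          show "gen (fst f r \<union> fst g r) \<subseteq> X" unfolding t(2)
            using fst_mono[OF hI, of r t] fst_mono[OF gI, of r t] t(1)
            by (intro gen_mono) auto
        qed
        show "\<Inter>{gen (fst f t \<union> fst g t) |t. r < t} \<subseteq> gen (fst f r \<union> fst g r)"
        proof
          fix x assume x: "x \<in> \<Inter>{gen (fst f t \<union> fst g t) |t. r < t}"
          have "x \<in> gen (\<Inter>(fst f ` {t. r < t}) \<union> \<Inter>(fst g ` {t. r < t}))"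
          proof (rule dir_lem)
            fix t u assume tu: "t \<in> {t. r < t}" "u \<in> {t. r < t}"
            define m where "m = min t u"
            have m: "r < m" "m \<le> t" "m \<le> u" using tu unfolding m_def by auto
            have "x \<in> gen (fst f m \<union> fst g m)" using x m(1) by blast
            also have "\<dots> \<subseteq> gen (fst f t \<union> fst g u)"
              using fst_mono[OF hI m(2)] fst_mono[OF gI m(3)] by (intro gen_mono) auto
            finally show "x \<in> gen (fst f t \<union> fst g u)" .
          qed (use homIR_D(1)[OF hI] homIR_D(1)[OF gI] in auto)
          also have "\<Inter>(fst f ` {t. r < t}) = fst f r"
            using homIR_D(4)[OF hI, of r] by (simp only: setcomp_img)
          also have "\<Inter>(fst g ` {t. r < t}) = fst g r"
            using homIR_D(4)[OF gI, of r] by (simp only: setcomp_img)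
          finally show "x \<in> gen (fst f r \<union> fst g r)" .
        qed
      qed
      then show "fst k r = \<Inter>{fst k t |t. r < t}" unfolding k_def by simp
    next
      fix s :: rat
      have "snd f s \<inter> snd g s = \<Inter>{snd f t \<inter> snd g t |t. t < s}"
      proof
        show "snd f s \<inter> snd g s \<subseteq> \<Inter>{snd f t \<inter> snd g t |t. t < s}"
        proof (rule Inter_greatest)
          fix X assume "X \<in> {snd f t \<inter> snd g t |t. t < s}"
          then obtain t where t: "t < s" "X = snd f t \<inter> snd g t" by blast
          show "snd f s \<inter> snd g s \<subseteq> X" unfolding t(2)
            using snd_mono[OF hI, of t s] snd_mono[OF gI, of t s] t(1) by auto
        qed
        show "\<Inter>{snd f t \<inter> snd g t |t. t < s} \<subseteq> snd f s \<inter> snd g s"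
        proof
          fix x assume x: "x \<in> \<Inter>{snd f t \<inter> snd g t |t. t < s}"
          have "x \<in> \<Inter>{snd f t |t. t < s}" using x by blast
          then have 1: "x \<in> snd f s" by (subst homIR_D(5)[OF hI])
          have "x \<in> \<Inter>{snd g t |t. t < s}" using x by blast
          then have 2: "x \<in> snd g s" by (subst homIR_D(5)[OF gI])
          show "x \<in> snd f s \<inter> snd g s" using 1 2 by blast
        qed
      qed
      then show "snd k s = \<Inter>{snd k t |t. t < s}" unfolding k_def by simp
    qed
  next
    fix r s :: rat assume rs: "r < s"
    have ci: "closed_sub (a r) \<inter> opn (a r) \<subseteq> {top}" using oc_inter by blast
    have c1: "opn (a r) \<inter> pc (fst g r) \<subseteq> pc (gen (closed_sub (a r) \<union> fst g r))"
      by (rule compl_lem[OF sub_closed sub_opn homIR_D(1)[OF gI] ci])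
    have "snd f s \<inter> snd g s \<subseteq> pc (gen (fst f r \<union> fst g r))"
      unfolding cl[of r] using c1 lsc1[OF rs] Fbar_D(1)[OF g rs] by blast
    then show "snd k s \<subseteq> pc (fst k r)" unfolding k_def by simp
  next
    fix r s :: rat assume rs: "r < s"
    have "fst f r \<union> fst g r \<subseteq> pc (snd f s \<inter> snd g s)"
      using Fbar_D(2)[OF fF rs] Fbar_D(2)[OF g rs] pc_anti[of "snd f s \<inter> snd g s" "snd f s"]
        pc_anti[of "snd f s \<inter> snd g s" "snd g s"] by blast
    then show "fst k r \<subseteq> pc (snd k s)" unfolding k_def by (simp add: gen_least pc_sub)
  qed
  have "Fle k f" unfolding Fle_iff k_def by (simp add: gen_Un1)
  moreover have "Fle k g" unfolding Fle_iff k_def by (simp add: gen_Un2)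
  ultimately have "Fle k minus_inf" using M kF unfolding is_Fmeet_def by blast
  then have hk: "gen (fst f r \<union> fst g r) = UNIV" for r
    unfolding Fle_iff k_def minus_inf_def coS_bot_def by auto
  have o1: "opn (a r) \<subseteq> fst g r" for r
    by (rule OPEN_lem[OF homIR_D(1)[OF gI]]) (use hk[of r] cl[of r] in simp)
  have fg: "fst g r = UNIV" for r
  proof -
    have "opn (a t) \<subseteq> fst g r" for t
    proof (cases "t \<le> r")
      case True
      then show ?thesis using o1[of t] fst_mono[OF gI True] by blast
    next
      case False
      then have "a t \<le> a r" using lsc3[of r t] by simp
      then show ?thesis using opn_mono o1[of r] by blast
    qed
    then have "gen (\<Union>t. opn (a t)) \<subseteq> fst g r" by (intro gen_least homIR_D(1)[OF gI]) blast
    then show ?thesis using opn_Sup_top[OF l2] by blast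
  qed
  have sg: "snd g s = {top}" for s
  proof -
    have "snd g s \<subseteq> pc (fst g (s - 1))" by (rule Fbar_D(1)[OF g]) simp
    then have "snd g s \<subseteq> {top}" using fg pc_UNIV by simp
    then show ?thesis using sub_top[OF homIR_D(2)[OF gI]] by blast
  qed
  show "g = minus_inf" unfolding minus_inf_def coS_top_def coS_bot_def
    by (rule prod_eqI) (simp_all add: fun_eq_iff fg sg)
qed

lemma C1:
  assumes fR: "f \<in> Freal"
  shows "Sup (range a) = top"
proof -
  define b where "b = Sup (range a)"
  have ab: "a r \<le> b" for r unfolding b_def by (rule Sup_upper) simp
  define g :: "'a rfun" where "g = ((\<lambda>r. opn b), (\<lambda>s. closed_sub b))"
  have gF: "g \<in> Fbar"
  proof (rule Fbar_I)
    show "hom_IR g" unfolding g_def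
      by (rule homIR_I) (simp_all add: sub_opn sub_closed oc_meet const_up const_down gt_ex lt_ex)
  qed (simp_all add: g_def pc_opn pc_closed)
  have fF: "f \<in> Fbar" by (rule lsc_Fbar)
  have "is_Fmeet f g minus_inf"
    unfolding is_Fmeet_def
  proof (intro conjI ballI impI)
    show "(minus_inf :: 'a rfun) \<in> Fbar" by (rule minus_Fbar)
    show "Fle minus_inf f" unfolding Fle_iff minus_inf_def coS_bot_def coS_top_def
      using sub_top[OF homIR_D(2)[OF hI]] by simp
    show "Fle minus_inf g" unfolding Fle_iff minus_inf_def coS_bot_def coS_top_def g_def
      using sub_top[OF sub_closed] by simp
    fix k assume kF: "k \<in> Fbar" and kk: "Fle k f \<and> Fle k g"
    have kI: "hom_IR k" using kF by (rule Fbar_IR)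
    have k1: "fst f r \<subseteq> fst k r" "opn b \<subseteq> fst k r" "snd k s \<subseteq> snd f s" "snd k s \<subseteq> closed_sub b"
      for r s using kk unfolding Fle_iff g_def by auto
    have "x \<in> fst k r" for x r
    proof -
      have "sup x b \<in> fst f r" using cl[of r] ab[of r] by (auto simp: closed_sub_def intro: le_supI2)
      moreover have "himp b x \<in> opn b" by (simp add: opn_def)
      ultimately have "sup x b \<in> fst k r" "himp b x \<in> fst k r" using k1(1,2) by blast+
      then have "inf (sup x b) (himp b x) \<in> fst k r" by (rule sub_inf[OF homIR_D(1)[OF kI]])
      then show ?thesis by (simp only: decomp)
    qed
    moreover have "snd k s \<subseteq> {top}" for s
    proof -
      have "closed_sub b \<subseteq> closed_sub (a (s - 1))" using ab[of "s - 1"]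
        by (auto simp: closed_sub_def)
      then have "snd k s \<subseteq> fst f (s - 1) \<inter> snd f s" using k1(3,4) cl by blast
      then show ?thesis using homR_D[OF hR, of "s - 1" s] by simp
    qed
    ultimately show "Fle k minus_inf" unfolding Fle_iff minus_inf_def coS_bot_def coS_top_def
      by auto
  qed
  then have "g = minus_inf" using fR gF unfolding Freal_def by blast
  then have "snd g 0 = snd minus_inf 0" by simp
  then have "closed_sub b = {top}" unfolding g_def minus_inf_def coS_top_def by simp
  then have "b = top" unfolding closed_sub_def by auto
  then show ?thesis unfolding b_def .
qed

lemma C2:
  assumes fR: "f \<in> Freal"
  shows "gen (\<Union>r. fst f r) = UNIV"
proof -
  define Oo where "Oo = \<Inter> (range (\<lambda>r. opn (a r)))"
  have Os: "is_sublocale Oo" unfolding Oo_def by (rule sub_Inter) (auto simp: sub_opn)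
  define g :: "'a rfun" where "g = ((\<lambda>r. pc (pc Oo)), (\<lambda>s. pc Oo))"
  have gF: "g \<in> Fbar"
  proof (rule Fbar_I)
    show "hom_IR g" unfolding g_def
    proof (rule homIR_I)
      show "gen (fst (\<lambda>r. pc (pc Oo), \<lambda>s. pc Oo) r \<union> snd (\<lambda>r. pc (pc Oo), \<lambda>s. pc Oo) s) = UNIV"
        for r s :: rat using meet_pc[OF pc_sub, of Oo] by (simp add: Un_commute)
    qed (simp_all add: pc_sub const_up const_down gt_ex lt_ex)
  qed (simp_all add: g_def pc3[OF Os])
  have SS: "S \<subseteq> gen (\<Union>r. fst f r)" if "S \<in> range (fst f)" for S
    using that gen_upper by blast
  have "is_Fjoin f g plus_inf"
    unfolding is_Fjoin_def
  proof (intro conjI ballI impI)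
    show "(plus_inf :: 'a rfun) \<in> Fbar" by (rule plus_Fbar)
    show "Fle f plus_inf" unfolding Fle_iff plus_inf_def coS_bot_def coS_top_def
      using sub_top[OF homIR_D(1)[OF hI]] by simp
    show "Fle g plus_inf" unfolding Fle_iff plus_inf_def coS_bot_def coS_top_def g_def
      using sub_top[OF pc_sub] by simp
    fix k assume kF: "k \<in> Fbar" and kk: "Fle f k \<and> Fle g k"
    have kI: "hom_IR k" using kF by (rule Fbar_IR)
    have k1: "snd f s \<subseteq> snd k s" "pc Oo \<subseteq> snd k s" for s
      using kk unfolding Fle_iff g_def by auto
    have sk: "snd k s = UNIV" for s
    proof -
      have "x \<in> gen (opn (a s) \<union> pc Oo)" for x
        unfolding pc_def
      proof (rule meetjoin[OF sub_opn])
        fix B assume B: "B \<in> {T. is_sublocale T \<and> gen (T \<union> Oo) = UNIV}"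
        then show "is_sublocale B" by simp
        have "Oo \<subseteq> opn (a s)" unfolding Oo_def by (rule Inter_lower) simp
        then have sub: "B \<union> Oo \<subseteq> opn (a s) \<union> B" by blast
        have "gen (B \<union> Oo) = UNIV" using B by simp
        then have "gen (opn (a s) \<union> B) = UNIV" using sub by (rule gen_UNIV_mono)
        then show "x \<in> gen (opn (a s) \<union> B)" by simp
      qed
      moreover have "gen (opn (a s) \<union> pc Oo) \<subseteq> snd k s"
        by (rule gen_least[OF _ homIR_D(2)[OF kI]]) (use lsc2[of s] k1[of s] in blast)
      ultimately show ?thesis by blast
    qed
    have "fst k r \<subseteq> {top}" for r
    proof -
      have "fst k r \<subseteq> pc (snd k (r + 1))" by (rule Fbar_D(2)[OF kF]) simp
      then show ?thesis using sk pc_UNIV by simp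
    qed
    then show "Fle plus_inf k" unfolding Fle_iff plus_inf_def coS_bot_def coS_top_def
      using sk by simp
  qed
  then have "g = plus_inf" using fR gF unfolding Freal_def by blast
  then have "snd g 0 = snd plus_inf 0" by simp
  then have pO: "pc Oo = UNIV" unfolding g_def plus_inf_def coS_bot_def by simp
  have "gen (gen (\<Union>r. fst f r) \<union> Oo) = UNIV"
  proof -
    have "x \<in> gen (gen (\<Union>r. fst f r) \<union> Oo)" for x
      unfolding Oo_def
    proof (rule meetjoin[OF gen_sub])
      fix B assume B: "B \<in> range (\<lambda>r. opn (a r))"
      then obtain r where r: "B = opn (a r)" by blast
      show "is_sublocale B" using r sub_opn by simp
      have "fst f r \<subseteq> gen (\<Union>r. fst f r)" using gen_upper by blast
      then have "gen (gen (\<Union>r. fst f r) \<union> B) = UNIV"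
        by (intro gen_UNIV_mono[OF oc_meet[of "a r"]]) (use r cl[of r] in auto)
      then show "x \<in> gen (gen (\<Union>r. fst f r) \<union> B)" by simp
    qed
    then show ?thesis by blast
  qed
  then have "pc Oo \<subseteq> gen (\<Union>r. fst f r)" by (rule pc_upper[OF gen_sub])
  then show ?thesis using pO by blast
qed

end


lemma closed_top_iff: "closed_sub b = {top} \<longleftrightarrow> (b::'a) = top"
  unfolding closed_sub_def by (auto simp: top_unique)

lemma get_a: "\<forall>r. is_closed_sub (fst f r) \<Longrightarrow> \<exists>a. \<forall>r. fst (f :: 'a rfun) r = closed_sub (a r)"
  unfolding is_closed_sub_def by (rule choice) simp

lemma l2_iff:
  assumes cl: "\<And>r. fst (f :: 'a rfun) r = closed_sub (a r)"
  shows "coS_Sup (range (fst f)) = coS_top \<longleftrightarrow> Sup (range a) = top"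
proof -
  have "range (fst f) = (\<lambda>r. closed_sub (a r)) ` UNIV" using cl by auto
  then have "coS_Sup (range (fst f)) = closed_sub (Sup (range a))"
    unfolding coS_Sup_def using closed_Inter[of a UNIV] by simp
  then show ?thesis unfolding coS_top_def using closed_top_iff by simp
qed

lemma LSC_eq: "(LSC :: 'a rfun set) = Freal \<inter> LSCbar"
proof (intro set_eqI iffI)
  fix f :: "'a rfun" assume f: "f \<in> LSC"
  then have hR: "hom_R f" and cls: "\<forall>r. is_closed_sub (fst f r)"
    and s2: "coS_Sup (range (fst f)) = coS_top" and s3: "coS_Inf (range (fst f)) = coS_bot"
    unfolding LSC_def by auto
  obtain a where cl: "\<And>r. fst f r = closed_sub (a r)" using get_a[OF cls] by blast
  have l2: "Sup (range a) = top" using s2 l2_iff[OF cl] by simp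
  have l3: "gen (\<Union>r. fst f r) = UNIV" using s3 unfolding coS_Inf_eq coS_bot_def .
  have "f \<in> Freal" unfolding Freal_def
  proof (intro CollectI conjI ballI impI)
    show "f \<in> Fbar" by (rule lsc_Fbar[OF hR cl])
    fix g :: "'a rfun" assume g: "g \<in> Fbar"
    show "g = plus_inf" if "is_Fjoin f g plus_inf" by (rule D1[OF hR cl l3 g that])
    show "g = minus_inf" if "is_Fmeet f g minus_inf" by (rule D2[OF hR cl l2 g that])
  qed
  moreover have "f \<in> LSCbar" unfolding LSCbar_def using hR cls by simp
  ultimately show "f \<in> Freal \<inter> LSCbar" by simp
next
  fix f :: "'a rfun" assume f: "f \<in> Freal \<inter> LSCbar"
  then have fR: "f \<in> Freal" and hR: "hom_R f" and cls: "\<forall>r. is_closed_sub (fst f r)"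
    unfolding LSCbar_def by auto
  obtain a where cl: "\<And>r. fst f r = closed_sub (a r)" using get_a[OF cls] by blast
  have "coS_Sup (range (fst f)) = coS_top" using C1[OF hR cl fR] l2_iff[OF cl] by simp
  moreover have "coS_Inf (range (fst f)) = coS_bot"
    using C2[OF hR cl fR] unfolding coS_Inf_eq coS_bot_def .
  ultimately show "f \<in> LSC" unfolding LSC_def using hR cls by simp
qed

definition flip :: "'a rfun \<Rightarrow> 'a rfun" where
  "flip f = ((\<lambda>r. snd f (- r)), (\<lambda>s. fst f (- s)))"

lemma flip_flip: "flip (flip f) = f"
  unfolding flip_def by simp

lemma reidx1: "{F (- t) |t::rat. r < t} = {F t |t. t < - r}"
proof (intro set_eqI iffI)
  fix x assume "x \<in> {F (- t) |t::rat. r < t}"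
  then obtain t where "x = F (- t)" "r < t" by blast
  then show "x \<in> {F t |t. t < - r}" by (intro CollectI exI[of _ "- t"]) simp
next
  fix x assume "x \<in> {F t |t. t < - r}"
  then obtain t where "x = F t" "t < - r" by blast
  then show "x \<in> {F (- t) |t::rat. r < t}" by (intro CollectI exI[of _ "- t"]) simp
qed

lemma reidx2: "{F (- t) |t::rat. t < s} = {F t |t. - s < t}"
proof (intro set_eqI iffI)
  fix x assume "x \<in> {F (- t) |t::rat. t < s}"
  then obtain t where "x = F (- t)" "t < s" by blast
  then show "x \<in> {F t |t. - s < t}" by (intro CollectI exI[of _ "- t"]) simp
next
  fix x assume "x \<in> {F t |t. - s < t}"
  then obtain t where "x = F t" "- s < t" by blast
  then show "x \<in> {F (- t) |t::rat. t < s}" by (intro CollectI exI[of _ "- t"]) simp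
qed

lemma homIR_flip: assumes h: "hom_IR (f :: 'a rfun)" shows "hom_IR (flip f)"
proof (rule homIR_I)
  show "is_sublocale (fst (flip f) r)" for r unfolding flip_def by (simp add: homIR_D(2)[OF h])
  show "is_sublocale (snd (flip f) s)" for s unfolding flip_def by (simp add: homIR_D(1)[OF h])
  show "gen (fst (flip f) r \<union> snd (flip f) s) = UNIV" if "s \<le> r" for r s
    using homIR_D(3)[OF h, of "- r" "- s"] that unfolding flip_def by (simp add: Un_commute)
  show "fst (flip f) r = \<Inter> {fst (flip f) t |t. r < t}" for r
    unfolding flip_def using homIR_D(5)[OF h, of "- r"] by (simp only: fst_conv reidx1)
  show "snd (flip f) s = \<Inter> {snd (flip f) t |t. t < s}" for s
    unfolding flip_def using homIR_D(4)[OF h, of "- s"] by (simp only: snd_conv reidx2)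
qed

lemma homR_flip: assumes h: "hom_R (f :: 'a rfun)" shows "hom_R (flip f)"
  unfolding hom_R_def
proof (intro conjI allI impI)
  show "hom_IR (flip f)" using h by (intro homIR_flip hom_R_IR)
  fix r s :: rat assume "r < s"
  then have "coS_join (fst f (- s)) (snd f (- r)) = coS_top" using h unfolding hom_R_def by simp
  then show "coS_join (fst (flip f) r) (snd (flip f) s) = coS_top"
    unfolding flip_def coS_join_def by (simp add: insert_commute)
qed

lemma homR_flip_iff: "hom_R (flip (f :: 'a rfun)) \<longleftrightarrow> hom_R f"
  using homR_flip[of f] homR_flip[of "flip f"] flip_flip[of f] by auto

lemma Fbar_flip: assumes f: "(f :: 'a rfun) \<in> Fbar" shows "flip f \<in> Fbar"
proof (rule Fbar_I)
  show "hom_IR (flip f)" using f by (intro homIR_flip Fbar_IR)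
  fix r s :: rat assume "r < s"
  then have rs: "- s < - r" by simp
  show "snd (flip f) s \<subseteq> pc (fst (flip f) r)" unfolding flip_def using Fbar_D(2)[OF f rs] by simp
  show "fst (flip f) r \<subseteq> pc (snd (flip f) s)" unfolding flip_def using Fbar_D(1)[OF f rs] by simp
qed

lemma all_neg: "(\<forall>r::rat. P (- r)) \<longleftrightarrow> (\<forall>r. P r)"
  by (metis minus_minus)

lemma Fle_flip: "Fle (flip f) (flip g) \<longleftrightarrow> Fle g f"
  unfolding Fle_iff flip_def by (simp add: all_neg[of "\<lambda>r. snd g r \<subseteq> snd f r"]
      all_neg[of "\<lambda>r. fst f r \<subseteq> fst g r"] conj_commute)

lemma flip_plus: "flip plus_inf = minus_inf" and flip_minus: "flip minus_inf = plus_inf"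
  unfolding flip_def plus_inf_def minus_inf_def by simp_all

lemma join_flip: assumes J: "is_Fjoin (f :: 'a rfun) g h" shows "is_Fmeet (flip f) (flip g) (flip h)"
  unfolding is_Fmeet_def
proof (intro conjI ballI impI)
  show "flip h \<in> Fbar" using J unfolding is_Fjoin_def by (simp add: Fbar_flip)
  show "Fle (flip h) (flip f)" "Fle (flip h) (flip g)" using J unfolding is_Fjoin_def
    by (simp_all add: Fle_flip)
  fix k :: "'a rfun" assume k: "k \<in> Fbar" "Fle k (flip f) \<and> Fle k (flip g)"
  have "Fle f (flip k) \<and> Fle g (flip k)" using k(2) Fle_flip[of "flip k"] flip_flip[of k] by simp
  then have "Fle h (flip k)" using J Fbar_flip[OF k(1)] unfolding is_Fjoin_def by blast
  then show "Fle k (flip h)" using Fle_flip[of "flip k" h] flip_flip[of k] by simp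
qed

lemma meet_flip: assumes M: "is_Fmeet (f :: 'a rfun) g h" shows "is_Fjoin (flip f) (flip g) (flip h)"
  unfolding is_Fjoin_def
proof (intro conjI ballI impI)
  show "flip h \<in> Fbar" using M unfolding is_Fmeet_def by (simp add: Fbar_flip)
  show "Fle (flip f) (flip h)" "Fle (flip g) (flip h)" using M unfolding is_Fmeet_def
    by (simp_all add: Fle_flip)
  fix k :: "'a rfun" assume k: "k \<in> Fbar" "Fle (flip f) k \<and> Fle (flip g) k"
  have "Fle (flip k) f \<and> Fle (flip k) g" using k(2) Fle_flip[of _ "flip k"] flip_flip[of k] by simp
  then have "Fle (flip k) h" using M Fbar_flip[OF k(1)] unfolding is_Fmeet_def by blast
  then show "Fle (flip h) k" using Fle_flip[of h "flip k"] flip_flip[of k] by simp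
qed

lemma Freal_flip: assumes f: "(f :: 'a rfun) \<in> Freal" shows "flip f \<in> Freal"
  unfolding Freal_def
proof (intro CollectI conjI ballI impI)
  have fF: "f \<in> Fbar" and fR: "\<And>g. g \<in> Fbar \<Longrightarrow> (is_Fjoin f g plus_inf \<longrightarrow> g = plus_inf) \<and>
      (is_Fmeet f g minus_inf \<longrightarrow> g = minus_inf)" using f unfolding Freal_def by auto
  show "flip f \<in> Fbar" by (rule Fbar_flip[OF fF])
  fix g :: "'a rfun" assume g: "g \<in> Fbar"
  show "g = plus_inf" if J: "is_Fjoin (flip f) g plus_inf"
  proof -
    have "is_Fmeet f (flip g) minus_inf" using join_flip[OF J] flip_flip[of f] flip_plus by simp
    then have "flip g = minus_inf" using fR[OF Fbar_flip[OF g]] by blast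
    then show ?thesis using flip_flip[of g] flip_minus by metis
  qed
  show "g = minus_inf" if M: "is_Fmeet (flip f) g minus_inf"
  proof -
    have "is_Fjoin f (flip g) plus_inf" using meet_flip[OF M] flip_flip[of f] flip_minus by simp
    then have "flip g = plus_inf" using fR[OF Fbar_flip[OF g]] by blast
    then show ?thesis using flip_flip[of g] flip_plus by metis
  qed
qed

lemma Freal_flip_iff: "flip (f :: 'a rfun) \<in> Freal \<longleftrightarrow> f \<in> Freal"
  using Freal_flip[of f] Freal_flip[of "flip f"] flip_flip[of f] by auto

lemma range_neg: "range (\<lambda>r::rat. F (- r)) = range F"
proof (intro set_eqI iffI)
  fix x assume "x \<in> range (\<lambda>r::rat. F (- r))"
  then obtain r where "x = F (- r)" by blast
  then show "x \<in> range F" by simp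
next
  fix x assume "x \<in> range F"
  then obtain r where "x = F r" by blast
  then have "x = F (- (- r))" by simp
  then show "x \<in> range (\<lambda>r::rat. F (- r))" by blast
qed

lemma USC_flip: "(f :: 'a rfun) \<in> USC \<longleftrightarrow> flip f \<in> LSC"
proof -
  have "range (fst (flip f)) = range (snd f)" unfolding flip_def
    using range_neg[of "snd f"] by simp
  moreover have "(\<forall>r. is_closed_sub (fst (flip f) r)) \<longleftrightarrow> (\<forall>s. is_closed_sub (snd f s))"
    unfolding flip_def using all_neg[of "\<lambda>r. is_closed_sub (snd f r)"] by simp
  ultimately show ?thesis unfolding USC_def LSC_def using homR_flip_iff[of f] by simp
qed

lemma USCbar_flip: "(f :: 'a rfun) \<in> USCbar \<longleftrightarrow> flip f \<in> LSCbar"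
proof -
  have "(\<forall>r. is_closed_sub (fst (flip f) r)) \<longleftrightarrow> (\<forall>s. is_closed_sub (snd f s))"
    unfolding flip_def using all_neg[of "\<lambda>r. is_closed_sub (snd f r)"] by simp
  then show ?thesis unfolding USCbar_def LSCbar_def using homR_flip_iff[of f] by simp
qed

lemma USC_eq: "(USC :: 'a rfun set) = Freal \<inter> USCbar"
proof (intro set_eqI)
  fix f :: "'a rfun"
  have "f \<in> USC \<longleftrightarrow> flip f \<in> Freal \<inter> LSCbar" using USC_flip LSC_eq by simp
  also have "\<dots> \<longleftrightarrow> f \<in> Freal \<inter> USCbar" using Freal_flip_iff USCbar_flip by simp
  finally show "f \<in> USC \<longleftrightarrow> f \<in> Freal \<inter> USCbar" .
qed

end

theorem proposition5p5:
  assumes "is_frame TYPE('a::complete_lattice)"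
  shows "(LSC :: 'a rfun set) = Freal \<inter> LSCbar \<and> (USC :: 'a rfun set) = Freal \<inter> USCbar"
proof -
  interpret frm "TYPE('a)" by unfold_locales (rule assms)
  show ?thesis using LSC_eq USC_eq by simp
qed

end
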